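(* $\operatorname{cf}\mathfrak s\geq\mathfrak h$.
   Context: The splitting number $\mathfrak s$ is the least cardinality of a family $\mathcal S\subseteq[\omega]^\omega$ such that for every $A\in[\omega]^\omega$ there is $S\in\mathcal S$ with both $A\cap S$ and $A\setminus S$ infinite. The cardinal $\mathfrak h$ is the smallest cardinal such that there exist $\mathfrak h$ sequentially compact topological spaces whose product is not sequentially compact (a space is sequentially compact if every sequence has a convergent subsequence). *)

theory Defs
  imports "HOL-Analysis.Analysis"
begin

definition splitting_family :: "nat set set \<Rightarrow> bool" where
  "splitting_family F \<longleftrightarrow> (\<forall>S\<in>F. infinite S) \<and>
     (\<forall>A::nat set. infinite A \<longrightarrow> (\<exists>S\<in>F. infinite (A \<inter> S) \<and> infinite (A - S)))"

definition split_num :: "nat set rel" where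
  "split_num = card_of (SOME F. splitting_family F \<and> (\<forall>G. splitting_family G \<longrightarrow> (card_of F, card_of G) \<in> ordLeq))"

definition seq_compact_space :: "'a topology \<Rightarrow> bool" where
  "seq_compact_space X \<longleftrightarrow>
     (\<forall>\<sigma>::nat \<Rightarrow> 'a. range \<sigma> \<subseteq> topspace X \<longrightarrow>
        (\<exists>r x. strict_mono r \<and> limitin X (\<sigma> \<circ> r) x sequentially))"

definition h_witness :: "'i set \<Rightarrow> ('i \<Rightarrow> 'a topology) \<Rightarrow> bool" where
  "h_witness I X \<longleftrightarrow> (\<forall>i\<in>I. seq_compact_space (X i)) \<and>
     \<not> seq_compact_space (product_topology X I)"

end

theory Submission
  imports Defs
begin

unbundle cardinal_syntax

definition unsplit :: "nat set set \<Rightarrow> nat set \<Rightarrow> bool" where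
  "unsplit G B \<longleftrightarrow> (\<forall>S\<in>G. finite (B \<inter> S) \<or> finite (B - S))"

definition psiopen :: "nat set set \<Rightarrow> nat set set \<Rightarrow> bool" where
 "psiopen AA U \<longleftrightarrow> (\<forall>B\<in>U\<inter>AA. finite {n\<in>B. {n} \<notin> U}) \<and>
    ({} \<in> U \<longrightarrow> (\<exists>CC. finite CC \<and> (\<forall>T. T \<notin> U \<longrightarrow> (\<exists>C\<in>CC. T = C \<or> (\<exists>n\<in>C. T = {n})))))"

lemma istop_psi: "istopology (psiopen AA)"
  unfolding istopology_def
proof (intro conjI allI impI)
  fix S T assume S: "psiopen AA S" and T: "psiopen AA T"
  show "psiopen AA (S \<inter> T)"
    unfolding psiopen_def
  proof (intro conjI ballI impI)
    fix B assume B: "B \<in> S \<inter> T \<inter> AA"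
    have "{n\<in>B. {n} \<notin> S \<inter> T} \<subseteq> {n\<in>B. {n} \<notin> S} \<union> {n\<in>B. {n} \<notin> T}" by auto
    moreover have "finite {n\<in>B. {n} \<notin> S}" "finite {n\<in>B. {n} \<notin> T}"
      using S T B unfolding psiopen_def by auto
    ultimately show "finite {n\<in>B. {n} \<notin> S \<inter> T}" by (meson finite_UnI finite_subset)
  next
    assume E: "{} \<in> S \<inter> T"
    obtain C1 where C1: "finite C1" "\<forall>X. X \<notin> S \<longrightarrow> (\<exists>C\<in>C1. X = C \<or> (\<exists>n\<in>C. X = {n}))"
      using S E unfolding psiopen_def by auto
    obtain C2 where C2: "finite C2" "\<forall>X. X \<notin> T \<longrightarrow> (\<exists>C\<in>C2. X = C \<or> (\<exists>n\<in>C. X = {n}))"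
      using T E unfolding psiopen_def by auto
    have "\<forall>X. X \<notin> S \<inter> T \<longrightarrow> (\<exists>C\<in>C1 \<union> C2. X = C \<or> (\<exists>n\<in>C. X = {n}))"
    proof (intro allI impI)
      fix X assume "X \<notin> S \<inter> T"
      then consider "X \<notin> S" | "X \<notin> T" by auto
      then show "\<exists>C\<in>C1 \<union> C2. X = C \<or> (\<exists>n\<in>C. X = {n})"
      proof cases
        case 1 then obtain C where "C \<in> C1" "X = C \<or> (\<exists>n\<in>C. X = {n})" using C1(2) by blast
        then show ?thesis by blast
      next
        case 2 then obtain C where "C \<in> C2" "X = C \<or> (\<exists>n\<in>C. X = {n})" using C2(2) by blast
        then show ?thesis by blast
      qed
    qed
    then show "\<exists>CC. finite CC \<and> (\<forall>X. X \<notin> S \<inter> T \<longrightarrow> (\<exists>C\<in>CC. X = C \<or> (\<exists>n\<in>C. X = {n})))"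
      using C1(1) C2(1) by blast
  qed
next
  fix K assume K: "\<forall>U\<in>K. psiopen AA U"
  show "psiopen AA (\<Union>K)"
    unfolding psiopen_def
  proof (intro conjI ballI impI)
    fix B assume "B \<in> \<Union>K \<inter> AA"
    then obtain U where U: "U \<in> K" "B \<in> U" "B \<in> AA" by auto
    have "{n\<in>B. {n} \<notin> \<Union>K} \<subseteq> {n\<in>B. {n} \<notin> U}" using U by auto
    moreover have "finite {n\<in>B. {n} \<notin> U}" using K U unfolding psiopen_def by auto
    ultimately show "finite {n\<in>B. {n} \<notin> \<Union>K}" by (rule finite_subset)
  next
    assume "{} \<in> \<Union>K"
    then obtain U where U: "U \<in> K" "{} \<in> U" by auto
    then obtain C1 where C1: "finite C1" "\<forall>X. X \<notin> U \<longrightarrow> (\<exists>C\<in>C1. X = C \<or> (\<exists>n\<in>C. X = {n}))"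
      using K unfolding psiopen_def by auto
    have "\<forall>X. X \<notin> \<Union>K \<longrightarrow> (\<exists>C\<in>C1. X = C \<or> (\<exists>n\<in>C. X = {n}))"
      using C1(2) U(1) by blast
    then show "\<exists>CC. finite CC \<and> (\<forall>X. X \<notin> \<Union>K \<longrightarrow> (\<exists>C\<in>CC. X = C \<or> (\<exists>n\<in>C. X = {n})))"
      using C1(1) by blast
  qed
qed

definition psitop :: "nat set set \<Rightarrow> nat set topology" where
  "psitop AA = topology (psiopen AA)"

lemma openin_psitop: "openin (psitop AA) U \<longleftrightarrow> psiopen AA U"
  unfolding psitop_def using istop_psi by (simp add: topology_inverse')

lemma topspace_psitop: "topspace (psitop AA) = UNIV"
proof -
  have "psiopen AA UNIV" unfolding psiopen_def by auto
  then show ?thesis by (metis openin_psitop openin_subset top.extremum_uniqueI)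
qed

lemma psiopen_single: "x \<noteq> {} \<Longrightarrow> (x \<in> AA \<Longrightarrow> finite x) \<Longrightarrow> psiopen AA {x}"
  unfolding psiopen_def by (auto intro: finite_subset)

lemma psiopen_B: "B \<noteq> {} \<Longrightarrow> psiopen AA (insert B {{n} |n. n \<in> B})"
proof -
  assume "B \<noteq> {}"
  then have E: "{} \<notin> insert B {{n} |n. n \<in> B}" by auto
  have *: "\<And>B'. B' \<in> insert B {{n} |n. n \<in> B} \<Longrightarrow> finite {n\<in>B'. {n} \<notin> insert B {{n} |n. n \<in> B}}"
  proof -
    fix B' assume "B' \<in> insert B {{n} |n. n \<in> B}"
    then show "finite {n\<in>B'. {n} \<notin> insert B {{n} |n. n \<in> B}}"
    proof
      assume "B' = B" then have "{n\<in>B'. {n} \<notin> insert B {{n} |n. n \<in> B}} = {}" by blast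
      then show ?thesis by (metis finite.emptyI)
    next
      assume "B' \<in> {{n} |n. n \<in> B}" then obtain m where "B' = {m}" by auto
      then show ?thesis by simp
    qed
  qed
  show ?thesis unfolding psiopen_def using * E by blast
qed

definition AD :: "nat set set \<Rightarrow> bool" where
  "AD AA \<longleftrightarrow> (\<forall>B\<in>AA. \<forall>B'\<in>AA. B \<noteq> B' \<longrightarrow> finite (B \<inter> B'))"

lemma psiopen_coB: "AD AA \<Longrightarrow> B \<in> AA \<Longrightarrow> psiopen AA (- insert B {{n} |n. n \<in> B})"
  unfolding psiopen_def
proof (intro conjI ballI impI)
  fix B' assume "AD AA" "B \<in> AA" "B' \<in> - insert B {{n} |n. n \<in> B} \<inter> AA"
  then have "finite (B' \<inter> B)" unfolding AD_def by auto
  moreover have "{n \<in> B'. {n} \<notin> - insert B {{n} |n. n \<in> B}} \<subseteq> B' \<inter> B" by auto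
  ultimately show "finite {n \<in> B'. {n} \<notin> - insert B {{n} |n. n \<in> B}}" by (meson finite_subset)
next
  show "\<exists>CC. finite CC \<and> (\<forall>T. T \<notin> - insert B {{n} |n. n \<in> B} \<longrightarrow> (\<exists>C\<in>CC. T = C \<or> (\<exists>n\<in>C. T = {n})))"
    by (intro exI[of _ "{B}"]) auto
qed

lemma sm_enum: "infinite M \<Longrightarrow> strict_mono (enumerate M)"
  by (simp add: strict_mono_def enumerate_mono)

lemma ev_notin_finite:
  assumes "strict_mono (r::nat\<Rightarrow>nat)" "finite M"
  shows "eventually (\<lambda>j. r j \<notin> M) sequentially"
proof -
  obtain N where "M \<subseteq> {..<N}" using assms(2) finite_nat_bounded by blast
  then have N: "\<forall>m\<in>M. m < N" by auto
  show ?thesis unfolding eventually_sequentially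
  proof (intro exI allI impI)
    fix j assume "N \<le> j"
    then have "N \<le> r j" using seq_suble[OF assms(1), of j] by linarith
    then show "r j \<notin> M" using N by auto
  qed
qed

lemma ev_range_finite:
  assumes "strict_mono (r::nat\<Rightarrow>nat)" "eventually (\<lambda>c. P (r c)) sequentially"
  shows "finite {a\<in>range r. \<not> P a}"
proof -
  obtain N where N: "\<forall>c\<ge>N. P (r c)" using assms(2) unfolding eventually_sequentially by auto
  have "{a\<in>range r. \<not> P a} \<subseteq> r ` {..<N}"
  proof
    fix a assume "a \<in> {a\<in>range r. \<not> P a}"
    then obtain c where "a = r c" "\<not> P (r c)" by auto
    then have "c < N" using N by (meson not_le)
    then show "a \<in> r ` {..<N}" using \<open>a = r c\<close> by auto
  qed
  then show ?thesis by (meson finite_imageI finite_lessThan finite_subset)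
qed

lemma fin_preimage:
  assumes "\<forall>x. finite {m. (\<sigma>::nat\<Rightarrow>'a) m = x}" "finite V"
  shows "finite {m. \<sigma> m \<in> V}"
proof -
  have "{m. \<sigma> m \<in> V} = (\<Union>x\<in>V. {m. \<sigma> m = x})" by auto
  then show ?thesis using assms by auto
qed

lemma psi_seqcompact:
  assumes P3: "\<forall>C. infinite C \<longrightarrow> (\<exists>B\<in>AA. infinite (C \<inter> B))"
  shows "seq_compact_space (psitop AA)"
  unfolding seq_compact_space_def
proof (intro allI impI)
  fix \<sigma> :: "nat \<Rightarrow> nat set"
  show "\<exists>r x. strict_mono r \<and> limitin (psitop AA) (\<sigma> \<circ> r) x sequentially"
  proof (cases "\<exists>x. infinite {m. \<sigma> m = x}")
    case True
    then obtain x where x: "infinite {m. \<sigma> m = x}" by auto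
    let ?r = "enumerate {m. \<sigma> m = x}"
    have "\<forall>j. \<sigma> (?r j) = x" using enumerate_in_set[OF x] by auto
    then have "limitin (psitop AA) (\<sigma> \<circ> ?r) x sequentially"
      unfolding limitin_def topspace_psitop by auto
    then show ?thesis using sm_enum[OF x] by blast
  next
    case False
    then have fin: "\<forall>x. finite {m. \<sigma> m = x}" by auto
    define M where "M = {m. \<exists>n. \<sigma> m = {n}}"
    show ?thesis
    proof (cases "finite M")
      case False
      define C where "C = {n. \<exists>m. \<sigma> m = {n}}"
      have "infinite C"
      proof
        assume "finite C"
        then have "finite {m. \<sigma> m \<in> (\<lambda>n. {n}) ` C}" using fin fin_preimage by blast
        moreover have "M \<subseteq> {m. \<sigma> m \<in> (\<lambda>n. {n}) ` C}" unfolding M_def C_def by auto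
        ultimately show False using False by (meson finite_subset)
      qed
      then obtain B where B: "B \<in> AA" "infinite (C \<inter> B)" using P3 by auto
      define M' where "M' = {m. \<exists>n\<in>B. \<sigma> m = {n}}"
      have M': "infinite M'"
      proof
        assume "finite M'"
        moreover have "\<forall>m\<in>M'. finite (\<sigma> m)" unfolding M'_def by auto
        ultimately have "finite (\<Union>(\<sigma> ` M'))" by auto
        moreover have "C \<inter> B \<subseteq> \<Union>(\<sigma> ` M')" unfolding C_def M'_def by force
        ultimately show False using B by (meson finite_subset)
      qed
      let ?r = "enumerate M'"
      have "limitin (psitop AA) (\<sigma> \<circ> ?r) B sequentially"
        unfolding limitin_def topspace_psitop
      proof (intro conjI allI impI UNIV_I)
        fix U assume U: "openin (psitop AA) U \<and> B \<in> U"
        then have "finite {n\<in>B. {n} \<notin> U}" using B unfolding openin_psitop psiopen_def by auto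
        then have "finite {m. \<sigma> m \<in> (\<lambda>n. {n}) ` {n\<in>B. {n} \<notin> U}}" using fin fin_preimage by blast
        then have ev: "eventually (\<lambda>j. ?r j \<notin> {m. \<sigma> m \<in> (\<lambda>n. {n}) ` {n\<in>B. {n} \<notin> U}}) sequentially"
          using ev_notin_finite sm_enum[OF M'] by blast
        show "eventually (\<lambda>j. (\<sigma> \<circ> ?r) j \<in> U) sequentially"
        proof (rule eventually_mono[OF ev])
          fix j assume j: "?r j \<notin> {m. \<sigma> m \<in> (\<lambda>n. {n}) ` {n\<in>B. {n} \<notin> U}}"
          have "?r j \<in> M'" using enumerate_in_set[OF M'] by blast
          then obtain n where "n \<in> B" "\<sigma> (?r j) = {n}" unfolding M'_def by auto
          then show "(\<sigma> \<circ> ?r) j \<in> U" using j by auto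
        qed
      qed
      then show ?thesis using sm_enum[OF M'] by blast
    next
      case True
      have M'': "infinite (- M)" using True by (simp add: Compl_eq_Diff_UNIV)
      let ?r = "enumerate (-M)"
      have "limitin (psitop AA) (\<sigma> \<circ> ?r) {} sequentially"
        unfolding limitin_def topspace_psitop
      proof (intro conjI allI impI UNIV_I)
        fix U assume U: "openin (psitop AA) U \<and> {} \<in> U"
        then obtain CC where CC: "finite CC" "\<forall>T. T \<notin> U \<longrightarrow> (\<exists>C\<in>CC. T = C \<or> (\<exists>n\<in>C. T = {n}))"
          unfolding openin_psitop psiopen_def by blast
        then have "finite {m. \<sigma> m \<in> CC}" using fin fin_preimage by blast
        then have ev: "eventually (\<lambda>j. ?r j \<notin> {m. \<sigma> m \<in> CC}) sequentially"
          using ev_notin_finite sm_enum[OF M''] by blast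
        show "eventually (\<lambda>j. (\<sigma> \<circ> ?r) j \<in> U) sequentially"
        proof (rule eventually_mono[OF ev])
          fix j assume j: "?r j \<notin> {m. \<sigma> m \<in> CC}"
          have "?r j \<notin> M" using enumerate_in_set[OF M''] by blast
          then have "\<forall>n. \<sigma> (?r j) \<noteq> {n}" unfolding M_def by auto
          then show "(\<sigma> \<circ> ?r) j \<in> U" using j CC(2) by force
        qed
      qed
      then show ?thesis using sm_enum[OF M''] by blast
    qed
  qed
qed

lemma prod_not_sc:
  fixes I :: "nat set set" and AAk Gk :: "nat set \<Rightarrow> nat set set"
  assumes H: "\<forall>k\<in>I. AD (AAk k) \<and> (\<forall>C. infinite C \<longrightarrow> (\<exists>B\<in>AAk k. infinite (C \<inter> B))) \<and> (\<forall>B\<in>AAk k. unsplit (Gk k) B)"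
    and Sp: "\<forall>A. infinite A \<longrightarrow> (\<exists>k\<in>I. \<exists>S\<in>Gk k. infinite (A \<inter> S) \<and> infinite (A - S))"
  shows "\<not> seq_compact_space (product_topology (\<lambda>k. psitop (AAk k)) I)"
proof
  assume sc: "seq_compact_space (product_topology (\<lambda>k. psitop (AAk k)) I)"
  define \<sigma> where "\<sigma> = (\<lambda>n::nat. restrict (\<lambda>k. {n}) I)"
  have "range \<sigma> \<subseteq> topspace (product_topology (\<lambda>k. psitop (AAk k)) I)"
    unfolding \<sigma>_def topspace_product_topology topspace_psitop by auto
  then obtain r x where r: "strict_mono r" and lim: "limitin (product_topology (\<lambda>k. psitop (AAk k)) I) (\<sigma> \<circ> r) x sequentially"
    using sc unfolding seq_compact_space_def by blast
  define A where "A = range r"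
  have "infinite A" unfolding A_def using r strict_mono_imp_inj_on range_inj_infinite by blast
  then obtain k S where k: "k \<in> I" "S \<in> Gk k" "infinite (A \<inter> S)" "infinite (A - S)" using Sp by blast
  have "limitin (psitop (AAk k)) (\<lambda>c. (\<sigma> \<circ> r) c k) (x k) sequentially"
    using lim k(1) unfolding limitin_componentwise by blast
  then have L: "limitin (psitop (AAk k)) (\<lambda>c. {r c}) (x k) sequentially"
    using k(1) unfolding \<sigma>_def by simp
  define y where "y = x k"
  have Hk: "AD (AAk k)" "\<forall>C. infinite C \<longrightarrow> (\<exists>B\<in>AAk k. infinite (C \<inter> B))" "\<forall>B\<in>AAk k. unsplit (Gk k) B"
    using H k(1) by auto
  show False
  proof (cases "y = {}")
    case True
    obtain B where B: "B \<in> AAk k" "infinite (A \<inter> B)" using Hk(2) \<open>infinite A\<close> by blast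
    then have "B \<noteq> {}" by auto
    have "openin (psitop (AAk k)) (- insert B {{n} |n. n \<in> B})"
      unfolding openin_psitop using psiopen_coB[OF Hk(1) B(1)] .
    moreover have "y \<in> - insert B {{n} |n. n \<in> B}" using True \<open>B \<noteq> {}\<close> by auto
    ultimately have "eventually (\<lambda>c. {r c} \<in> - insert B {{n} |n. n \<in> B}) sequentially"
      using L unfolding limitin_def y_def by blast
    then have "eventually (\<lambda>c. r c \<notin> B) sequentially" by (rule eventually_mono) auto
    then have "finite {a\<in>range r. \<not> a \<notin> B}" using ev_range_finite[OF r, of "\<lambda>a. a \<notin> B"] by blast
    moreover have "A \<inter> B = {a\<in>range r. \<not> a \<notin> B}" unfolding A_def by auto
    ultimately show False using B by simp
  next
    case False
    show False
    proof (cases "y \<in> AAk k")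
      case True
      have "openin (psitop (AAk k)) (insert y {{n} |n. n \<in> y})"
        unfolding openin_psitop using psiopen_B[OF False] .
      then have "eventually (\<lambda>c. {r c} \<in> insert y {{n} |n. n \<in> y}) sequentially"
        using L unfolding limitin_def y_def by blast
      then have "eventually (\<lambda>c. r c \<in> y) sequentially" by (rule eventually_mono) auto
      then have "finite {a\<in>range r. a \<notin> y}" using ev_range_finite[OF r, of "\<lambda>a. a \<in> y"] by blast
      moreover have "A - y = {a\<in>range r. a \<notin> y}" unfolding A_def by auto
      ultimately have fA: "finite (A - y)" by simp
      have "finite (y \<inter> S) \<or> finite (y - S)" using Hk(3) True k(2) unfolding unsplit_def by blast
      moreover have "A \<inter> S \<subseteq> (A - y) \<union> (y \<inter> S)" "A - S \<subseteq> (A - y) \<union> (y - S)" by auto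
      ultimately show False using fA k(3,4) by (meson finite_UnI finite_subset)
    next
      case yn: False
      have "openin (psitop (AAk k)) {y}"
        unfolding openin_psitop using psiopen_single[OF False] yn by blast
      then have "eventually (\<lambda>c. {r c} \<in> {y}) sequentially"
        using L unfolding limitin_def y_def by blast
      then obtain N where N: "\<forall>c\<ge>N. {r c} = y" unfolding eventually_sequentially by auto
      then have "r N = r (Suc N)" by (metis le_Suc_eq order_refl singleton_inject)
      then show False using r unfolding strict_mono_def by (metis lessI less_irrefl)
    qed
  qed
qed

lemma unsplit_mono: "unsplit G B \<Longrightarrow> B' \<subseteq> B \<Longrightarrow> unsplit G B'"
  unfolding unsplit_def by (meson Diff_mono Int_mono finite_subset order_refl)

lemma fin_unsplit:
  assumes "finite G"
  shows "infinite C \<Longrightarrow> \<exists>B\<subseteq>C. infinite B \<and> unsplit G B"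
  using assms
proof (induction G arbitrary: C rule: finite_induct)
  case empty
  then show ?case unfolding unsplit_def by auto
next
  case (insert S G)
  then obtain B where B: "B \<subseteq> C" "infinite B" "unsplit G B" by blast
  show ?case
  proof (cases "finite (B \<inter> S)")
    case True
    then show ?thesis using B unfolding unsplit_def by auto
  next
    case False
    have "unsplit G (B \<inter> S)" using unsplit_mono B(3) by blast
    moreover have "B \<inter> S - S = {}" by blast
    then have "finite (B \<inter> S - S)" by (metis finite.emptyI)
    ultimately have "unsplit (insert S G) (B \<inter> S)" unfolding unsplit_def by auto
    then show ?thesis using False B(1) by (meson inf.coboundedI1)
  qed
qed

lemma split_exists:
  assumes A: "infinite (A::nat set)"
  shows "\<exists>S. infinite S \<and> infinite (A \<inter> S) \<and> infinite (A - S)"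
proof -
  let ?e = "enumerate A"
  have inj: "inj ?e" using sm_enum[OF A] strict_mono_imp_inj_on by blast
  define S where "S = ?e ` range (\<lambda>n. 2*n)"
  have "inj (\<lambda>n::nat. 2*n)" by (auto simp: inj_def)
  then have i1: "infinite (range (\<lambda>n::nat. 2*n))" using range_inj_infinite by blast
  have "inj (\<lambda>n::nat. 2*n+1)" by (auto simp: inj_def)
  then have i2: "infinite (range (\<lambda>n::nat. 2*n+1))" using range_inj_infinite by blast
  have SA: "S \<subseteq> A" unfolding S_def using enumerate_in_set[OF A] by auto
  have iS: "infinite S" unfolding S_def using i1 inj by (meson finite_imageD inj_on_subset subset_UNIV)
  have "?e ` range (\<lambda>n. 2*n+1) \<subseteq> A - S"
  proof
    fix x assume "x \<in> ?e ` range (\<lambda>n. 2*n+1)"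
    then obtain m where m: "x = ?e (2*m+1)" by auto
    have "x \<notin> S"
    proof
      assume "x \<in> S"
      then obtain n where "x = ?e (2*n)" unfolding S_def by auto
      then have "2*m+1 = 2*n" using m inj unfolding inj_def by metis
      then show False by presburger
    qed
    then show "x \<in> A - S" using m enumerate_in_set[OF A] by auto
  qed
  moreover have "infinite (?e ` range (\<lambda>n. 2*n+1))" using i2 inj by (meson finite_imageD inj_on_subset subset_UNIV)
  ultimately have "infinite (A - S)" by (meson finite_subset)
  moreover have "A \<inter> S = S" using SA by auto
  ultimately show ?thesis using iS by auto
qed

lemma splitting_exists: "splitting_family {S. infinite S}"
  unfolding splitting_family_def using split_exists by blast

lemma splitting_infinite: "splitting_family F \<Longrightarrow> infinite F"
proof
  assume "splitting_family F" "finite F"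
  then obtain B where "infinite B" "unsplit F B" using fin_unsplit[of F UNIV] by auto
  then show False using \<open>splitting_family F\<close> unfolding splitting_family_def unsplit_def by blast
qed

lemma key_unsplit:
  assumes min: "\<forall>G. splitting_family G \<longrightarrow> |F| \<le>o |G|"
    and G0: "|G0| <o |F|" and C: "infinite (C::nat set)"
  shows "\<exists>B\<subseteq>C. infinite B \<and> unsplit G0 B"
proof -
  let ?e = "enumerate C"
  have inj: "inj ?e" using sm_enum[OF C] strict_mono_imp_inj_on by blast
  define G' where "G' = (\<lambda>S. ?e -` S) ` {S\<in>G0. infinite (?e -` S)}"
  have "|G'| \<le>o |G0|" unfolding G'_def
    using card_of_image card_of_mono1 ordLeq_transitive by (metis (no_types, lifting) mem_Collect_eq subsetI)
  then have "|G'| <o |F|" using G0 ordLeq_ordLess_trans by blast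
  then have "\<not> splitting_family G'" using min not_ordLess_ordLeq by blast
  moreover have "\<forall>S\<in>G'. infinite S" unfolding G'_def by auto
  ultimately obtain A where A: "infinite A" "\<forall>S\<in>G'. finite (A \<inter> S) \<or> finite (A - S)"
    unfolding splitting_family_def by blast
  define B where "B = ?e ` A"
  have "B \<subseteq> C" unfolding B_def using enumerate_in_set[OF C] by auto
  moreover have "infinite B" unfolding B_def using A(1) inj by (meson finite_imageD inj_on_subset subset_UNIV)
  moreover have "unsplit G0 B" unfolding unsplit_def
  proof
    fix S assume S: "S \<in> G0"
    have e1: "B \<inter> S = ?e ` (A \<inter> ?e -` S)" unfolding B_def by auto
    have e2: "B - S = ?e ` (A - ?e -` S)" unfolding B_def by auto
    show "finite (B \<inter> S) \<or> finite (B - S)"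
    proof (cases "infinite (?e -` S)")
      case True
      then have "?e -` S \<in> G'" unfolding G'_def using S by auto
      then show ?thesis using A(2) e1 e2 by auto
    next
      case False
      then show ?thesis using e1 by auto
    qed
  qed
  ultimately show ?thesis by blast
qed

lemma get_AD:
  assumes sub: "\<forall>C. infinite (C::nat set) \<longrightarrow> (\<exists>B\<subseteq>C. infinite B \<and> unsplit G B)"
  shows "\<exists>AA. AD AA \<and> (\<forall>C. infinite C \<longrightarrow> (\<exists>B\<in>AA. infinite (C \<inter> B))) \<and> (\<forall>B\<in>AA. unsplit G B)"
proof -
  define U0 where "U0 = {B. infinite B \<and> unsplit G B}"
  define P where "P = {AA. AA \<subseteq> U0 \<and> AD AA}"
  have "\<forall>Ch\<in>chains P. \<Union>Ch \<in> P"
  proof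
    fix Ch assume Ch: "Ch \<in> chains P"
    then have Ch1: "Ch \<subseteq> P" and Ch2: "\<forall>X\<in>Ch. \<forall>Y\<in>Ch. X \<subseteq> Y \<or> Y \<subseteq> X"
      unfolding chains_def chain_subset_def by auto
    have "\<Union>Ch \<subseteq> U0" using Ch1 unfolding P_def by auto
    moreover have "AD (\<Union>Ch)" unfolding AD_def
    proof (intro ballI impI)
      fix B B' assume "B \<in> \<Union>Ch" "B' \<in> \<Union>Ch" "B \<noteq> B'"
      then obtain X Y where "X \<in> Ch" "Y \<in> Ch" "B \<in> X" "B' \<in> Y" by auto
      then obtain Z where Z: "Z \<in> Ch" "B \<in> Z" "B' \<in> Z"
      proof -
        assume th: "\<And>Z. Z \<in> Ch \<Longrightarrow> B \<in> Z \<Longrightarrow> B' \<in> Z \<Longrightarrow> thesis"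
        have "X \<subseteq> Y \<or> Y \<subseteq> X" using Ch2 \<open>X \<in> Ch\<close> \<open>Y \<in> Ch\<close> by blast
        then show thesis
        proof
          assume "X \<subseteq> Y" then show thesis using th[of Y] \<open>Y \<in> Ch\<close> \<open>B \<in> X\<close> \<open>B' \<in> Y\<close> by blast
        next
          assume "Y \<subseteq> X" then show thesis using th[of X] \<open>X \<in> Ch\<close> \<open>B \<in> X\<close> \<open>B' \<in> Y\<close> by blast
        qed
      qed
      have "Z \<in> P" using Ch1 Z(1) by blast
      then have "AD Z" unfolding P_def by simp
      then show "finite (B \<inter> B')" using Z(2,3) \<open>B \<noteq> B'\<close> unfolding AD_def by blast
    qed
    ultimately show "\<Union>Ch \<in> P" unfolding P_def by auto
  qed
  then obtain M where M: "M \<in> P" "\<forall>X\<in>P. M \<subseteq> X \<longrightarrow> X = M" using Zorn_Lemma[of P] by blast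
  have P3: "\<forall>C. infinite C \<longrightarrow> (\<exists>B\<in>M. infinite (C \<inter> B))"
  proof (intro allI impI)
    fix C :: "nat set" assume "infinite C"
    then obtain B0 where B0: "B0 \<subseteq> C" "infinite B0" "unsplit G B0" using sub by blast
    show "\<exists>B\<in>M. infinite (C \<inter> B)"
    proof (rule ccontr)
      assume "\<not> (\<exists>B\<in>M. infinite (C \<inter> B))"
      have fB: "\<forall>B\<in>M. finite (B0 \<inter> B)"
      proof
        fix B assume "B \<in> M"
        then have "finite (C \<inter> B)" using \<open>\<not> (\<exists>B\<in>M. infinite (C \<inter> B))\<close> by blast
        moreover have "B0 \<inter> B \<subseteq> C \<inter> B" using B0(1) by blast
        ultimately show "finite (B0 \<inter> B)" by (rule finite_subset[rotated])
      qed
      have MP: "M \<subseteq> U0" "AD M" using M(1) unfolding P_def by auto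
      have "AD (insert B0 M)" unfolding AD_def
      proof (intro ballI impI)
        fix X Y assume XY: "X \<in> insert B0 M" "Y \<in> insert B0 M" "X \<noteq> Y"
        show "finite (X \<inter> Y)"
        proof (cases "X = B0")
          case True
          then have "Y \<in> M" using XY by auto
          then show ?thesis using fB True by auto
        next
          case False
          then have X: "X \<in> M" using XY by auto
          show ?thesis
          proof (cases "Y = B0")
            case True
            then have "finite (B0 \<inter> X)" using fB X by auto
            then show ?thesis using True by (simp add: inf_commute)
          next
            case False
            then have "Y \<in> M" using XY by auto
            then show ?thesis using X XY(3) MP(2) unfolding AD_def by blast
          qed
        qed
      qed
      moreover have "insert B0 M \<subseteq> U0" using MP(1) B0 unfolding U0_def by auto
      ultimately have "insert B0 M \<in> P" unfolding P_def by auto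
      then have "insert B0 M = M" using M(2) by blast
      then have "B0 \<in> M" by blast
      then show False using fB B0(2) by auto
    qed
  qed
  have "M \<subseteq> U0" "AD M" using M(1) unfolding P_def by auto
  then have "\<forall>B\<in>M. unsplit G B" unfolding U0_def by blast
  then show ?thesis using \<open>AD M\<close> P3 by blast
qed

definition goodAD :: "nat set set \<Rightarrow> nat set set \<Rightarrow> bool" where
  "goodAD G AA \<longleftrightarrow> AD AA \<and> (\<forall>C. infinite C \<longrightarrow> (\<exists>B\<in>AA. infinite (C \<inter> B))) \<and> (\<forall>B\<in>AA. unsplit G B)"

theorem corollary4p4:
  shows "\<exists>(I::nat set set) (X::nat set \<Rightarrow> nat set topology).
           h_witness I X \<and>
           (\<forall>K. K \<subseteq> Field split_num \<and> cofinal K split_num \<longrightarrow> (card_of I, card_of K) \<in> ordLeq)"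
proof -
  let ?R = "card_of ` {G::nat set set. splitting_family G}"
  have "?R \<noteq> {}" using splitting_exists by blast
  moreover have "\<forall>r\<in>?R. Well_order r" using card_of_Well_order by blast
  ultimately obtain r0 where "r0 \<in> ?R" "\<forall>r'\<in>?R. r0 \<le>o r'" using exists_minim_Well_order[of ?R] by blast
  then have ex: "\<exists>F. splitting_family F \<and> (\<forall>G. splitting_family G \<longrightarrow> (card_of F, card_of G) \<in> ordLeq)" by blast
  define F where "F = (SOME F. splitting_family F \<and> (\<forall>G. splitting_family G \<longrightarrow> (card_of F, card_of G) \<in> ordLeq))"
  have Fp: "splitting_family F" "\<forall>G. splitting_family G \<longrightarrow> |F| \<le>o |G|"
    using someI_ex[OF ex] unfolding F_def by blast+
  have sn: "split_num = |F|" unfolding split_num_def F_def ..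
  have Finf: "infinite F" using splitting_infinite Fp(1) by blast
  define Fk where "Fk = (\<lambda>k. insert k (underS |F| k))"
  have small: "\<forall>k\<in>F. |Fk k| <o |F|"
  proof
    fix k assume k: "k \<in> F"
    have "|underS |F| k| <o |F|" using card_of_underS[OF card_of_Card_order, of k F] k by (simp add: Field_card_of)
    moreover have "|{k}| <o |F|" using finite_ordLess_infinite[OF card_of_Well_order card_of_Well_order, of "{k}" F] Finf
      by (simp add: Field_card_of)
    ultimately have "|{k} \<union> underS |F| k| <o |F|" using card_of_Un_ordLess_infinite[OF Finf] by blast
    then show "|Fk k| <o |F|" unfolding Fk_def by simp
  qed
  have AAex: "\<forall>k\<in>F. \<exists>AA. goodAD (Fk k) AA"
  proof
    fix k assume "k \<in> F"
    then have "\<forall>C. infinite (C::nat set) \<longrightarrow> (\<exists>B\<subseteq>C. infinite B \<and> unsplit (Fk k) B)"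
      using key_unsplit[OF Fp(2)] small by blast
    then show "\<exists>AA. goodAD (Fk k) AA" unfolding goodAD_def by (rule get_AD)
  qed
  define AAk where "AAk = (\<lambda>k. SOME AA. goodAD (Fk k) AA)"
  have AAp: "\<forall>k\<in>F. goodAD (Fk k) (AAk k)"
  proof
    fix k assume "k \<in> F"
    then have "\<exists>AA. goodAD (Fk k) AA" using AAex by blast
    then show "goodAD (Fk k) (AAk k)" unfolding AAk_def by (rule someI_ex)
  qed
  define Kset where "Kset = {K. K \<subseteq> F \<and> cofinal K |F|}"
  obtain I where I: "I \<subseteq> F" "\<forall>a\<in>F. \<exists>k\<in>I. a \<in> Fk k" "\<forall>K\<in>Kset. |I| \<le>o |K|"
  proof (cases "Kset = {}")
    case True
    have c1: "\<forall>a\<in>F. \<exists>k\<in>F. a \<in> Fk k" unfolding Fk_def by blast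
    have c2: "\<forall>K\<in>Kset. |F| \<le>o |K|" using True by blast
    show ?thesis using that[OF subset_refl c1 c2] .
  next
    case False
    then have "card_of ` Kset \<noteq> {}" by blast
    moreover have "\<forall>r\<in>card_of ` Kset. Well_order r" using card_of_Well_order by blast
    ultimately obtain r1 where "r1 \<in> card_of ` Kset" "\<forall>r'\<in>card_of ` Kset. r1 \<le>o r'"
      using exists_minim_Well_order[of "card_of ` Kset"] by blast
    then obtain K0 where K0a: "K0 \<in> Kset" "r1 = |K0|" by (meson imageE)
    have K0b: "\<forall>K\<in>Kset. |K0| \<le>o |K|"
    proof
      fix K assume "K \<in> Kset"
      then have "|K| \<in> card_of ` Kset" by (rule imageI)
      then show "|K0| \<le>o |K|" using \<open>\<forall>r'\<in>card_of ` Kset. r1 \<le>o r'\<close> K0a(2) by metis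
    qed
    have K0c: "K0 \<subseteq> F" "cofinal K0 |F|" using K0a(1) unfolding Kset_def by auto
    have "\<forall>a\<in>F. \<exists>k\<in>K0. a \<in> Fk k"
    proof
      fix a assume "a \<in> F"
      then have "a \<in> Field |F|" by (simp only: Field_card_of)
      then obtain b where "b \<in> K0" "a \<noteq> b" "(a, b) \<in> |F|"
        using K0c(2) unfolding cofinal_def by blast
      then show "\<exists>k\<in>K0. a \<in> Fk k" unfolding Fk_def underS_def by auto
    qed
    then show ?thesis using that[OF K0c(1) _ K0b] by blast
  qed
  have hw: "h_witness I (\<lambda>k. psitop (AAk k))"
    unfolding h_witness_def
  proof
    show "\<forall>i\<in>I. seq_compact_space (psitop (AAk i))"
    proof
      fix i assume "i \<in> I"
      then have "i \<in> F" using I(1) by blast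
      then have "goodAD (Fk i) (AAk i)" using AAp by blast
      then have "\<forall>C. infinite C \<longrightarrow> (\<exists>B\<in>AAk i. infinite (C \<inter> B))" unfolding goodAD_def by blast
      then show "seq_compact_space (psitop (AAk i))" by (rule psi_seqcompact)
    qed
    have H: "\<forall>k\<in>I. AD (AAk k) \<and> (\<forall>C. infinite C \<longrightarrow> (\<exists>B\<in>AAk k. infinite (C \<inter> B))) \<and> (\<forall>B\<in>AAk k. unsplit (Fk k) B)"
    proof
      fix k assume "k \<in> I"
      then have "goodAD (Fk k) (AAk k)" using AAp I(1) by blast
      then show "AD (AAk k) \<and> (\<forall>C. infinite C \<longrightarrow> (\<exists>B\<in>AAk k. infinite (C \<inter> B))) \<and> (\<forall>B\<in>AAk k. unsplit (Fk k) B)"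
        unfolding goodAD_def .
    qed
    have Sp: "\<forall>A. infinite A \<longrightarrow> (\<exists>k\<in>I. \<exists>S\<in>Fk k. infinite (A \<inter> S) \<and> infinite (A - S))"
    proof (intro allI impI)
      fix A :: "nat set" assume "infinite A"
      then obtain S where "S \<in> F" "infinite (A \<inter> S)" "infinite (A - S)" using Fp(1) unfolding splitting_family_def by blast
      then show "\<exists>k\<in>I. \<exists>S\<in>Fk k. infinite (A \<inter> S) \<and> infinite (A - S)" using I(2) by blast
    qed
    show "\<not> seq_compact_space (product_topology (\<lambda>k. psitop (AAk k)) I)"
      using prod_not_sc[OF H Sp] .
  qed
  have "\<forall>K. K \<subseteq> Field split_num \<and> cofinal K split_num \<longrightarrow> (card_of I, card_of K) \<in> ordLeq"
    using I(3) unfolding sn Kset_def by (simp add: Field_card_of)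
  then show ?thesis using hw by blast
qed

end
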